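(* The commutative monoid $M$ defined below is residually finite, all its $\mathcal{J}$-classes have finitely many $\mathcal{R}$- and $\mathcal{L}$-classes, but its action on its $\mathcal{R}$-classes (equivalently, since $M$ is commutative, on its $\mathcal{L}$-classes) is not residually finite.
   Context: Let $\tau:\mathbb{Z}\setminus\{0\}\to\mathbb{Z}$, $\tau(2^k(2r+1))=\frac{2}{3}(2^{2\lceil k/2\rceil}-1)$ ($k,r\in\mathbb{Z}$, $k\ge0$). Let $M$ be the commutative monoid with zero $0$ given by generators $a,a^{-1},b_i,c_i$ ($i\in\mathbb{Z}$), $d,e$ and relations $aa^{-1}=a^{-1}a=1$; $b_ic_j=d$ if $i=j$ and $b_ic_j=a^{\tau(j-i)}e$ if $i\neq j$; and $b_ib_j=b_id=b_ie=c_jc_k=c_jd=c_je=dd=de=ee=0$ for all $i,j,k\in\mathbb{Z}$. A monoid is residually finite if distinct elements are separated by homomorphisms to finite monoids. Green's relations: $x\mathcal{R}y$ iff $xM=yM$, $x\mathcal{L}y$ iff $Mx=My$, $x\mathcal{J}y$ iff $MxM=MyM$. The action of $M$ on $M/\mathcal{R}$ ($m\cdot R_x=R_{mx}$) is residually finite if any two distinct classes are separated by an action homomorphism to an action on a finite set, equivalently for all $(s,t)\notin\mathcal{R}$ there is a finite-index (left) congruence containing $\mathcal{R}$ but not $(s,t)$. *)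

theory Defs
  imports Main "HOL-Library.Multiset"
begin

definition R_rel :: "'a::monoid_mult \<Rightarrow> 'a \<Rightarrow> bool" where
  "R_rel x y \<longleftrightarrow> range (\<lambda>m. x * m) = range (\<lambda>m. y * m)"

definition L_rel :: "'a::monoid_mult \<Rightarrow> 'a \<Rightarrow> bool" where
  "L_rel x y \<longleftrightarrow> range (\<lambda>m. m * x) = range (\<lambda>m. m * y)"

definition J_rel :: "'a::monoid_mult \<Rightarrow> 'a \<Rightarrow> bool" where
  "J_rel x y \<longleftrightarrow> {m * x * n | m n. True} = {m * y * n | m n. True}"

text \<open>Every finite monoid is isomorphic to one
  whose carrier is a finite set of natural numbers, so we take the target
  monoid to be given by a finite carrier S :: nat set, an operation f and a
  unit e.\<close>
definition finite_monoid_on :: "nat set \<Rightarrow> (nat \<Rightarrow> nat \<Rightarrow> nat) \<Rightarrow> nat \<Rightarrow> bool" where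
  "finite_monoid_on S f e \<longleftrightarrow> finite S \<and> e \<in> S \<and>
     (\<forall>a\<in>S. \<forall>b\<in>S. f a b \<in> S) \<and>
     (\<forall>a\<in>S. \<forall>b\<in>S. \<forall>c\<in>S. f (f a b) c = f a (f b c)) \<and>
     (\<forall>a\<in>S. f e a = a \<and> f a e = a)"

definition residually_finite :: "'a::monoid_mult itself \<Rightarrow> bool" where
  "residually_finite _ \<longleftrightarrow>
     (\<forall>x y :: 'a. x \<noteq> y \<longrightarrow>
        (\<exists>(S::nat set) f e (h::'a \<Rightarrow> nat).
            finite_monoid_on S f e \<and> (\<forall>m. h m \<in> S) \<and> h 1 = e \<and>
            (\<forall>m n. h (m * n) = f (h m) (h n)) \<and> h x \<noteq> h y))"

text \<open>Residual finiteness of the action of M on M/R (m . R_x = R_{mx}):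
  any two distinct R-classes are separated by an action homomorphism into an
  action of M on a finite set X (taken inside nat). A map on M/R is represented
  as a map on M that is constant on R-classes.\<close>
definition R_action_residually_finite :: "'a::monoid_mult itself \<Rightarrow> bool" where
  "R_action_residually_finite _ \<longleftrightarrow>
     (\<forall>s t :: 'a. \<not> R_rel s t \<longrightarrow>
        (\<exists>(X::nat set) (act::'a \<Rightarrow> nat \<Rightarrow> nat) (\<phi>::'a \<Rightarrow> nat).
            finite X \<and> (\<forall>m. \<forall>x\<in>X. act m x \<in> X) \<and>
            (\<forall>x\<in>X. act 1 x = x) \<and>
            (\<forall>m n. \<forall>x\<in>X. act (m * n) x = act m (act n x)) \<and>
            (\<forall>y. \<phi> y \<in> X) \<and> (\<forall>y z. R_rel y z \<longrightarrow> \<phi> y = \<phi> z) \<and>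
            (\<forall>m y. \<phi> (m * y) = act m (\<phi> y)) \<and>
            \<phi> s \<noteq> \<phi> t))"

definition R_classes_in_J :: "'a::monoid_mult \<Rightarrow> 'a set set" where
  "R_classes_in_J x = (\<lambda>y. {z. R_rel y z}) ` {y. J_rel x y}"

definition L_classes_in_J :: "'a::monoid_mult \<Rightarrow> 'a set set" where
  "L_classes_in_J x = (\<lambda>y. {z. L_rel y z}) ` {y. J_rel x y}"

datatype gen = GA | GAinv | GB int | GC int | GD | GE | GZero

definition v2 :: "int \<Rightarrow> nat" where
  "v2 n = (LEAST k. \<not> (2::int) ^ Suc k dvd n)"

text \<open>tau(2^k(2r+1)) = 2/3 (2^{2 ceil(k/2)} - 1); note ceil(k/2) = (k+1) div 2
  for k a natural number, and 3 divides 2(4^m - 1).\<close>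
definition tau :: "int \<Rightarrow> int" where
  "tau n = (2 * (2 ^ (2 * ((v2 n + 1) div 2)) - 1)) div 3"

definition apow :: "int \<Rightarrow> gen multiset" where
  "apow n = (if 0 \<le> n then replicate_mset (nat n) GA else replicate_mset (nat (- n)) GAinv)"

inductive rel0 :: "gen multiset \<Rightarrow> gen multiset \<Rightarrow> bool" where
  r_inv: "rel0 {#GA, GAinv#} {#}"
| r_bc_eq: "rel0 {#GB i, GC i#} {#GD#}"
| r_bc_neq: "i \<noteq> j \<Longrightarrow> rel0 {#GB i, GC j#} (apow (tau (j - i)) + {#GE#})"
| r_bb: "rel0 {#GB i, GB j#} {#GZero#}"
| r_bd: "rel0 {#GB i, GD#} {#GZero#}"
| r_be: "rel0 {#GB i, GE#} {#GZero#}"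
| r_cc: "rel0 {#GC j, GC k#} {#GZero#}"
| r_cd: "rel0 {#GC j, GD#} {#GZero#}"
| r_ce: "rel0 {#GC j, GE#} {#GZero#}"
| r_dd: "rel0 {#GD, GD#} {#GZero#}"
| r_de: "rel0 {#GD, GE#} {#GZero#}"
| r_ee: "rel0 {#GE, GE#} {#GZero#}"
| r_zero: "rel0 {#GZero, g#} {#GZero#}"

inductive mcong :: "gen multiset \<Rightarrow> gen multiset \<Rightarrow> bool" where
  mc_base: "rel0 u v \<Longrightarrow> mcong u v"
| mc_refl: "mcong u u"
| mc_sym: "mcong u v \<Longrightarrow> mcong v u"
| mc_trans: "mcong u v \<Longrightarrow> mcong v w \<Longrightarrow> mcong u w"
| mc_add: "mcong u v \<Longrightarrow> mcong (u + w) (v + w)"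

lemma mcong_equivp: "equivp mcong"
  by (intro equivpI reflpI sympI transpI) (auto intro: mcong.intros)

quotient_type M = "gen multiset" / mcong
  by (rule mcong_equivp)

lemma mcong_add2: "mcong u v \<Longrightarrow> mcong u' v' \<Longrightarrow> mcong (u + u') (v + v')"
proof -
  assume a: "mcong u v" and b: "mcong u' v'"
  have "mcong (u + u') (v + u')" using a by (rule mc_add)
  moreover have "mcong (u' + v) (v' + v)" using b by (rule mc_add)
  hence "mcong (v + u') (v + v')" by (simp add: add.commute)
  ultimately show ?thesis by (rule mc_trans)
qed

instantiation M :: comm_monoid_mult
begin
lift_definition one_M :: M is "{#}" .
lift_definition times_M :: "M \<Rightarrow> M \<Rightarrow> M" is "(+)"
  by (rule mcong_add2)
instance
  by standard (transfer, simp add: add.assoc add.commute add.left_commute mc_refl)+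
end

end

theory Submission
  imports Defs
begin


lemma v2_eq: "2^k dvd n \<Longrightarrow> \<not> 2^Suc k dvd n \<Longrightarrow> v2 n = k"
  unfolding v2_def
proof (rule Least_equality)
  fix k' assume a: "2^k dvd n" and "\<not> (2::int) ^ Suc k' dvd n"
  then show "k \<le> k'"
  proof -
    { assume "k' < k"
      then have "(2::int)^Suc k' dvd 2^k" by (metis le_imp_power_dvd Suc_leI)
      with a have "(2::int) ^ Suc k' dvd n" using dvd_trans by blast
    }
    with \<open>\<not> (2::int) ^ Suc k' dvd n\<close> show ?thesis by fastforce
  qed
qed simp

lemma int_less_pow2: "int k < (2::int)^k"
proof (induction k)
  case (Suc k)
  have "(1::int) \<le> 2^k" by simp
  then show ?case using Suc by (simp only: power_Suc of_nat_Suc)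
qed simp

lemma v2_props: assumes "n \<noteq> 0" shows "2^v2 n dvd n" "\<not> 2^Suc (v2 n) dvd n"
proof -
  have ex: "\<not> (2::int)^Suc (nat \<bar>n\<bar>) dvd n"
  proof
    assume "(2::int)^Suc (nat \<bar>n\<bar>) dvd n"
    then have "\<bar>(2::int)^Suc (nat \<bar>n\<bar>)\<bar> \<le> \<bar>n\<bar>" using assms dvd_imp_le_int by blast
    moreover have "int (nat \<bar>n\<bar>) < 2 ^ Suc (nat \<bar>n\<bar>)"
      using int_less_pow2[of "Suc (nat \<bar>n\<bar>)"] by simp
    ultimately show False by simp
  qed
  show "\<not> 2^Suc (v2 n) dvd n" unfolding v2_def by (rule LeastI[of _ "nat \<bar>n\<bar>"]) (rule ex)
  show "2^v2 n dvd n"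
  proof (cases "v2 n")
    case 0 then show ?thesis by simp
  next
    case (Suc k)
    then have "k < v2 n" by simp
    then have "\<not> \<not> (2::int) ^ Suc k dvd n" unfolding v2_def by (rule not_less_Least)
    then show ?thesis using Suc by simp
  qed
qed

definition SS :: "nat \<Rightarrow> int" where "SS m = (\<Sum>l<m. 4^l)"

lemma four_pow: "(4::int)^m - 1 = 3 * SS m"
  by (induction m) (auto simp: SS_def algebra_simps)

lemma tau_SS: "tau n = 2 * SS ((v2 n + 1) div 2)"
proof -
  have "(2::int) ^ (2 * ((v2 n + 1) div 2)) = 4 ^ ((v2 n + 1) div 2)"
    by (simp add: power_mult)
  then show ?thesis unfolding tau_def using four_pow[of "(v2 n + 1) div 2"] by simp
qed

lemma SS_add: "SS (a + b) = SS a + 4^a * SS b"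
  by (induction b) (auto simp: SS_def algebra_simps power_add)

lemma SS_cong: assumes "(K+1) div 2 \<le> m'" "m' \<le> m" shows "(2::int)^K dvd SS m - SS m'"
proof -
  obtain b where m: "m = m' + b" using assms(2) le_Suc_ex by blast
  have "K \<le> 2 * m'" using assms(1) by linarith
  then have "(2::int)^K dvd 2^(2*m')" by (rule le_imp_power_dvd)
  also have "(2::int)^(2*m') = 4^m'" by (simp add: power_mult)
  finally have "(2::int)^K dvd 4^m' * SS b" by simp
  then show ?thesis using m SS_add by simp
qed

lemma v2_same:
  assumes "z \<noteq> 0" "z' \<noteq> 0" "z mod 2^K = z' mod 2^K" "v2 z < K"
  shows "v2 z' = v2 z"
proof -
  have d: "(2::int)^K dvd z - z'" using assms(3) mod_eq_dvd_iff by blast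
  have "(2::int)^v2 z dvd 2^K" using assms(4) by (intro le_imp_power_dvd) simp
  then have d1: "(2::int)^v2 z dvd z - z'" using d dvd_trans by blast
  have "(2::int)^Suc (v2 z) dvd 2^K" using assms(4) by (intro le_imp_power_dvd) simp
  then have d2: "(2::int)^Suc (v2 z) dvd z - z'" using d dvd_trans by blast
  have "2^v2 z dvd z - (z - z')" using v2_props(1)[OF assms(1)] d1 by (rule dvd_diff)
  then have "2^v2 z dvd z'" by simp
  moreover have "\<not> 2^Suc (v2 z) dvd z'"
  proof
    assume "2^Suc (v2 z) dvd z'"
    then have "2^Suc (v2 z) dvd (z - z') + z'" using d2 by (intro dvd_add)
    then show False using v2_props(2)[OF assms(1)] by simp
  qed
  ultimately show ?thesis by (rule v2_eq)
qed

lemma v2_big: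
  assumes "z \<noteq> 0" "z' \<noteq> 0" "z mod 2^K = z' mod 2^K" "K \<le> v2 z"
  shows "K \<le> v2 z'"
proof (rule ccontr)
  assume "\<not> K \<le> v2 z'"
  then have "v2 z' < K" by simp
  from v2_same[OF assms(2,1) _ this] assms(3) have "v2 z = v2 z'" by simp
  with \<open>v2 z' < K\<close> assms(4) show False by simp
qed

lemma tau_cong_aux:
  assumes "z \<noteq> 0" "z' \<noteq> 0" "z mod 2^K = z' mod 2^K" "K \<le> v2 z" "v2 z \<le> v2 z'"
  shows "tau z mod 2^K = tau z' mod 2^K"
proof -
  have "(2::int)^K dvd SS ((v2 z' + 1) div 2) - SS ((v2 z + 1) div 2)"
    by (rule SS_cong) (use assms in \<open>auto intro: div_le_mono\<close>)
  then have "(2::int)^K dvd tau z' - tau z" unfolding tau_SS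
    by (metis dvd_mult right_diff_distrib)
  then show ?thesis by (metis mod_eq_dvd_iff)
qed

lemma tau_cong:
  assumes "z \<noteq> 0" "z' \<noteq> 0" "z mod 2^K = z' mod 2^K"
  shows "tau z mod 2^K = tau z' mod 2^K"
proof (cases "v2 z < K")
  case True
  then show ?thesis using v2_same[OF assms True] by (simp add: tau_def)
next
  case False
  then have k1: "K \<le> v2 z" by simp
  have k2: "K \<le> v2 z'" by (rule v2_big[OF assms k1])
  show ?thesis
  proof (cases "v2 z \<le> v2 z'")
    case True then show ?thesis using tau_cong_aux[OF assms k1] by simp
  next
    case False then show ?thesis using tau_cong_aux[OF assms(2,1) _ k2] assms(3) by simp
  qed
qed

lemma v2_pow: "v2 (2^K) = K"
proof (rule v2_eq)
  show "\<not> (2::int) ^ Suc K dvd 2 ^ K"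
  proof
    assume "(2::int) ^ Suc K dvd 2 ^ K"
    then have "\<bar>(2::int) ^ Suc K\<bar> \<le> \<bar>2 ^ K\<bar>" by (intro dvd_imp_le_int) simp_all
    then show False by simp
  qed
qed simp

lemma tau_pow: "3 * tau (2^K) = 2 * 4^((K+1) div 2) - 2"
  unfolding tau_SS v2_pow using four_pow[of "(K+1) div 2"] by simp

lemma sep_DE:
  assumes "\<bar>3*(m-n)+2\<bar> < 2^K"
  shows "(n + tau (2^K)) mod 2^K \<noteq> m mod 2^K"
proof
  assume "(n + tau (2^K)) mod 2^K = m mod 2^K"
  then have "(2::int)^K dvd m - n - tau (2^K)" by (metis mod_eq_dvd_iff diff_diff_eq)
  then have a: "(2::int)^K dvd 3*(m-n) - 3* tau (2^K)" 
    by (metis dvd_mult right_diff_distrib diff_diff_eq)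
  have "K \<le> 2 * ((K+1) div 2)" by linarith
  then have "(2::int)^K dvd 2^(2*((K+1) div 2))" by (rule le_imp_power_dvd)
  also have "(2::int)^(2*((K+1) div 2)) = 4^((K+1) div 2)" by (simp add: power_mult)
  finally have b: "(2::int)^K dvd 2 * 4^((K+1) div 2)" by simp
  have "(2::int)^K dvd (3*(m-n) - 3* tau (2^K)) + 2 * 4^((K+1) div 2)"
    using a b by (rule dvd_add)
  also have "(3*(m-n) - 3* tau (2^K)) + 2 * 4^((K+1) div 2) = 3*(m-n)+2"
    using tau_pow[of K] by simp
  finally have c: "(2::int)^K dvd 3*(m-n)+2" .
  have "3*(m-n)+2 \<noteq> 0"
  proof
    assume "3*(m-n)+2 = 0"
    then have "3*(m-n) = -2" by simp
    then show False by presburger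
  qed
  then have "\<bar>(2::int)^K\<bar> \<le> \<bar>3*(m-n)+2\<bar>" using c dvd_imp_le_int by blast
  then have "(2::int)^K \<le> \<bar>3*(m-n)+2\<bar>" by (metis abs_of_nonneg zero_le_power zero_le_numeral)
  then show False using assms by (meson not_le)
qed




datatype tgt = TU int | TB int int | TC int int | TE int | TZ

definition FF :: "int \<Rightarrow> int \<Rightarrow> int" where
  "FF N z = tau (if z mod N = 0 then N else z mod N)"

fun tm :: "int \<Rightarrow> tgt \<Rightarrow> tgt \<Rightarrow> tgt" where
  "tm N (TU g) (TU h) = TU ((g+h) mod N)"
| "tm N (TU g) (TB x h) = TB x ((g+h) mod N)"
| "tm N (TU g) (TC x h) = TC x ((g+h) mod N)"
| "tm N (TU g) (TE h) = TE ((g+h) mod N)"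
| "tm N (TB x h) (TU g) = TB x ((g+h) mod N)"
| "tm N (TC x h) (TU g) = TC x ((g+h) mod N)"
| "tm N (TE h) (TU g) = TE ((g+h) mod N)"
| "tm N (TB x g) (TC y h) = TE ((g+h+FF N (y-x)) mod N)"
| "tm N (TC y h) (TB x g) = TE ((g+h+FF N (y-x)) mod N)"
| "tm N _ _ = TZ"

lemma tm_comm: "tm N x y = tm N y x"
  by (cases x; cases y) (simp_all add: ac_simps)

lemma modX: "(a + (b mod N + c)) mod N = (a + (b + c)) mod N" for a b c N :: int
  by (metis add.left_commute mod_add_left_eq)

lemma tm_assoc: "tm N (tm N x y) z = tm N x (tm N y z)"
  by (cases x; cases y; cases z) (simp_all add: mod_simps ac_simps modX)

lemma tm_Z[simp]: "tm N TZ y = TZ" "tm N y TZ = TZ"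
  by (cases y; simp)+

definition genv :: "int \<Rightarrow> gen \<Rightarrow> tgt" where
  "genv N g = (case g of GA \<Rightarrow> TU (1 mod N) | GAinv \<Rightarrow> TU ((-1) mod N)
     | GB i \<Rightarrow> TB (i mod N) 0 | GC j \<Rightarrow> TC (j mod N) 0 | GD \<Rightarrow> TE (FF N 0 mod N)
     | GE \<Rightarrow> TE 0 | GZero \<Rightarrow> TZ)"

definition eval :: "int \<Rightarrow> gen multiset \<Rightarrow> tgt" where
  "eval N u = fold_mset (\<lambda>g t. tm N (genv N g) t) (TU 0) u"

lemma cfc: "comp_fun_commute (\<lambda>g t. tm N (genv N g) t)"
  by unfold_locales (auto simp: fun_eq_iff, metis tm_assoc tm_comm)

lemma eval_empty[simp]: "eval N {#} = TU 0"
  by (simp add: eval_def)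

lemma eval_add_mset[simp]: "eval N (add_mset g u) = tm N (genv N g) (eval N u)"
  unfolding eval_def by (rule comp_fun_commute.fold_mset_add_mset[OF cfc])

definition gnorm :: "int \<Rightarrow> tgt \<Rightarrow> bool" where
  "gnorm N t = (case t of TU g \<Rightarrow> g mod N = g | TB x g \<Rightarrow> g mod N = g | TC x g \<Rightarrow> g mod N = g
     | TE g \<Rightarrow> g mod N = g | TZ \<Rightarrow> True)"

lemma gnorm_tm: "gnorm N (tm N x y)"
  by (cases x; cases y) (simp_all add: gnorm_def)

lemma gnorm_eval: "gnorm N (eval N u)"
  by (induction u) (simp_all add: gnorm_tm, simp add: gnorm_def)

lemma tm_unit: "gnorm N t \<Longrightarrow> tm N (TU 0) t = t"
  by (cases t) (simp_all add: gnorm_def)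

lemma eval_add: "eval N (u + w) = tm N (eval N u) (eval N w)"
proof (induction u)
  case empty
  then show ?case using tm_unit[OF gnorm_eval] by simp
next
  case (add x u)
  then show ?case by (simp add: tm_assoc)
qed

definition good :: "int \<Rightarrow> tgt \<Rightarrow> bool" where
  "good N t = (case t of TU g \<Rightarrow> g \<in> {0..<N} | TB x g \<Rightarrow> x \<in> {0..<N} \<and> g \<in> {0..<N}
     | TC x g \<Rightarrow> x \<in> {0..<N} \<and> g \<in> {0..<N} | TE g \<Rightarrow> g \<in> {0..<N} | TZ \<Rightarrow> True)"

lemma good_tm: "N > 0 \<Longrightarrow> good N x \<Longrightarrow> good N y \<Longrightarrow> good N (tm N x y)"
  by (cases x; cases y) (simp_all add: good_def)

lemma good_eval: "N > 0 \<Longrightarrow> good N (eval N u)"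
proof (induction u)
  case empty then show ?case by (simp add: good_def)
next
  case (add x u)
  have "good N (genv N x)" using add.prems by (cases x) (simp_all add: good_def genv_def)
  then show ?case using add good_tm by simp
qed

lemma finite_good: "finite {t. good N t}"
proof -
  let ?I = "{0..<N}"
  have "{t. good N t} \<subseteq> TU ` ?I \<union> case_prod TB ` (?I \<times> ?I) \<union> case_prod TC ` (?I \<times> ?I) \<union> TE ` ?I \<union> {TZ}"
  proof
    fix t assume "t \<in> {t. good N t}"
    then show "t \<in> TU ` ?I \<union> case_prod TB ` (?I \<times> ?I) \<union> case_prod TC ` (?I \<times> ?I) \<union> TE ` ?I \<union> {TZ}"
      by (cases t) (auto simp: good_def image_iff)
  qed
  then show ?thesis by (rule finite_subset) auto
qed




lemma eval_repA: "eval N (replicate_mset k GA) = TU (int k mod N)"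
  by (induction k) (simp_all add: genv_def mod_simps ac_simps)

lemma eval_repAi: "eval N (replicate_mset k GAinv) = TU (- int k mod N)"
  by (induction k) (simp_all add: genv_def mod_simps ac_simps)

lemma eval_apow[simp]: "eval N (apow n) = TU (n mod N)"
  by (simp add: apow_def eval_repA eval_repAi)

lemma FF_tau:
  assumes "i \<noteq> j"
  shows "FF (2^K) (j mod 2^K - i mod 2^K) mod 2^K = tau (j - i) mod 2^K"
proof -
  let ?N = "(2::int)^K"
  have e: "(j mod ?N - i mod ?N) mod ?N = (j - i) mod ?N" by (simp add: mod_diff_eq)
  let ?z = "if (j - i) mod ?N = 0 then ?N else (j - i) mod ?N"
  have z0: "?z \<noteq> 0" by simp
  have zm: "(j - i) mod ?N = ?z mod ?N" by simp
  have "FF ?N (j mod ?N - i mod ?N) = tau ?z" unfolding FF_def e ..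
  also have "tau ?z mod ?N = tau (j - i) mod ?N"
    by (rule tau_cong[OF z0 _ zm[symmetric]]) (use assms in simp)
  finally show ?thesis .
qed

lemma eval_rel0: "rel0 u v \<Longrightarrow> eval (2^K) u = eval (2^K) v"
proof (induction rule: rel0.induct)
  case (r_bc_neq i j)
  then show ?case using FF_tau[OF r_bc_neq, of K] by (simp add: genv_def eval_add mod_simps)
qed (simp_all add: genv_def eval_add mod_simps FF_def)

lemma eval_mcong: "mcong u v \<Longrightarrow> eval (2^K) u = eval (2^K) v"
  by (induction rule: mcong.induct) (simp_all add: eval_rel0 eval_add)

lift_definition evalM :: "nat \<Rightarrow> M \<Rightarrow> tgt" is "\<lambda>K u. eval (2^K) u"
  by (rule eval_mcong)

lemma evalM_mult: "evalM K (x * y) = tm (2^K) (evalM K x) (evalM K y)"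
  by transfer (rule eval_add)

lemma evalM_good: "good (2^K) (evalM K x)"
  by transfer (rule good_eval, simp)

lemma evalM_finite: "finite (range (evalM K))"
  by (rule finite_subset[OF _ finite_good[of "2^K"]]) (auto simp: evalM_good)




datatype nf = NU int | NB int int | NC int int | ND int | NE int | NZ

fun rep :: "nf \<Rightarrow> gen multiset" where
  "rep (NU n) = apow n"
| "rep (NB i n) = add_mset (GB i) (apow n)"
| "rep (NC i n) = add_mset (GC i) (apow n)"
| "rep (ND n) = add_mset GD (apow n)"
| "rep (NE n) = add_mset GE (apow n)"
| "rep NZ = {#GZero#}"

lemma mc_addL: "mcong u v \<Longrightarrow> mcong (w + u) (w + v)"
  using mc_add[of u v w] by (simp add: add.commute)

lemma mc_sub: "rel0 P Q \<Longrightarrow> P \<subseteq># u \<Longrightarrow> mcong u (u - P + Q)"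
proof -
  assume r: "rel0 P Q" and s: "P \<subseteq># u"
  have "mcong ((u - P) + P) ((u - P) + Q)" by (rule mc_addL[OF mc_base[OF r]])
  then show ?thesis using s by (simp add: subset_mset.diff_add)
qed

lemma mc_eq: "u = v \<Longrightarrow> mcong u v" by (simp add: mc_refl)

lemma zero_abs: "mcong (add_mset GZero w) {#GZero#}"
proof (induction w)
  case empty then show ?case by (rule mc_refl)
next
  case (add x w)
  have "mcong (add_mset GZero w + {#x#}) ({#GZero#} + {#x#})" by (rule mc_add[OF add])
  then have "mcong (add_mset GZero (add_mset x w)) {#GZero, x#}" by (simp add: add_mset_commute)
  then show ?case using mc_base[OF r_zero[of x]] mc_trans by blast
qed

lemma zero_sub: "rel0 P {#GZero#} \<Longrightarrow> P \<subseteq># u \<Longrightarrow> mcong u {#GZero#}"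
proof -
  assume r: "rel0 P {#GZero#}" and s: "P \<subseteq># u"
  have "mcong u (add_mset GZero (u - P))" using mc_sub[OF r s] by simp
  then show ?thesis using zero_abs mc_trans by blast
qed

lemma apow_GA: "mcong (add_mset GA (apow n)) (apow (n+1))"
proof (cases "n \<ge> 0")
  case True
  then have e: "nat (n+1) = Suc (nat n)" by simp
  have "apow (n+1) = replicate_mset (nat (n+1)) GA" using True by (simp add: apow_def)
  also have "\<dots> = add_mset GA (apow n)" using True by (simp only: e replicate_mset_Suc) (simp add: apow_def)
  finally show ?thesis by (simp add: mc_refl)
next
  case False
  define k where "k = nat (-n-1)"
  have e: "nat (-n) = Suc k" using False unfolding k_def by simp
  have a: "apow n = add_mset GAinv (replicate_mset k GAinv)" using False unfolding apow_def
    by (simp only: if_False e replicate_mset_Suc)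
  have b: "apow (n+1) = replicate_mset k GAinv"
  proof (cases "n = -1")
    case True then show ?thesis unfolding apow_def k_def by simp
  next
    case False
    then have "\<not> 0 \<le> n + 1" "nat (- (n + 1)) = k" using \<open>\<not> n \<ge> 0\<close> unfolding k_def by simp_all
    then show ?thesis unfolding apow_def by simp
  qed
  have "mcong (add_mset GA (apow n)) (add_mset GA (apow n) - {#GA, GAinv#} + {#})"
    by (rule mc_sub[OF r_inv]) (simp add: a)
  then show ?thesis by (simp add: a b)
qed

lemma apow_GAi: "mcong (add_mset GAinv (apow n)) (apow (n-1))"
proof (cases "n \<le> 0")
  case True
  then have e: "nat (-(n-1)) = Suc (nat (-n))" by simp
  have "apow (n-1) = replicate_mset (nat (-(n-1))) GAinv" using True by (simp add: apow_def)
  also have "\<dots> = add_mset GAinv (apow n)" using True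
    by (simp only: e replicate_mset_Suc) (simp add: apow_def)
  finally show ?thesis by (simp add: mc_refl)
next
  case False
  define k where "k = nat (n-1)"
  have e: "nat n = Suc k" using False unfolding k_def by simp
  have a: "apow n = add_mset GA (replicate_mset k GA)" using False unfolding apow_def
    by (simp only: e replicate_mset_Suc if_True) simp
  have b: "apow (n-1) = replicate_mset k GA" using False unfolding apow_def k_def by simp
  have "mcong (add_mset GAinv (apow n)) (add_mset GAinv (apow n) - {#GA, GAinv#} + {#})"
    by (rule mc_sub[OF r_inv]) (simp add: a)
  then show ?thesis by (simp add: a b)
qed

lemma apow_repA: "mcong (apow n + replicate_mset k GA) (apow (n + int k))"
proof (induction k)
  case 0 then show ?case by (simp add: mc_refl)
next
  case (Suc k)
  have "mcong ({#GA#} + (apow n + replicate_mset k GA)) ({#GA#} + apow (n + int k))"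
    by (rule mc_addL[OF Suc])
  then have "mcong (apow n + replicate_mset (Suc k) GA) (add_mset GA (apow (n + int k)))" by simp
  from mc_trans[OF this apow_GA[of "n + int k"]] show ?case by (simp add: ac_simps)
qed

lemma apow_repAi: "mcong (apow n + replicate_mset k GAinv) (apow (n - int k))"
proof (induction k)
  case 0 then show ?case by (simp add: mc_refl)
next
  case (Suc k)
  have "mcong ({#GAinv#} + (apow n + replicate_mset k GAinv)) ({#GAinv#} + apow (n - int k))"
    by (rule mc_addL[OF Suc])
  then have "mcong (apow n + replicate_mset (Suc k) GAinv) (add_mset GAinv (apow (n - int k)))" by simp
  moreover have "n - int k - 1 = n - int (Suc k)" by simp
  ultimately show ?case using mc_trans[OF _ apow_GAi[of "n - int k"]] by metis
qed

lemma apow_add: "mcong (apow n + apow m) (apow (n + m))"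
proof (cases "m \<ge> 0")
  case True
  then have "apow m = replicate_mset (nat m) GA" "n + int (nat m) = n + m" by (simp_all add: apow_def)
  then show ?thesis using apow_repA[of n "nat m"] by simp
next
  case False
  then have "apow m = replicate_mset (nat (-m)) GAinv" "n - int (nat (-m)) = n + m" by (simp_all add: apow_def)
  then show ?thesis using apow_repAi[of n "nat (-m)"] by metis
qed




fun mulg :: "gen \<Rightarrow> nf \<Rightarrow> nf" where
  "mulg GA (NU n) = NU (n+1)" | "mulg GA (NB i n) = NB i (n+1)" | "mulg GA (NC i n) = NC i (n+1)"
| "mulg GA (ND n) = ND (n+1)" | "mulg GA (NE n) = NE (n+1)" | "mulg GA NZ = NZ"
| "mulg GAinv (NU n) = NU (n-1)" | "mulg GAinv (NB i n) = NB i (n-1)" | "mulg GAinv (NC i n) = NC i (n-1)"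
| "mulg GAinv (ND n) = ND (n-1)" | "mulg GAinv (NE n) = NE (n-1)" | "mulg GAinv NZ = NZ"
| "mulg (GB i) (NU n) = NB i n"
| "mulg (GB i) (NC j n) = (if i = j then ND n else NE (n + tau (j - i)))"
| "mulg (GC j) (NU n) = NC j n"
| "mulg (GC j) (NB i n) = (if i = j then ND n else NE (n + tau (j - i)))"
| "mulg GD (NU n) = ND n" | "mulg GE (NU n) = NE n"
| "mulg _ _ = NZ"

lemma shiftA: "mcong (add_mset GA (add_mset X (apow n))) (add_mset X (apow (n+1)))"
  using mc_addL[OF apow_GA[of n], of "{#X#}"] by (simp add: add_mset_commute)

lemma shiftAi: "mcong (add_mset GAinv (add_mset X (apow n))) (add_mset X (apow (n-1)))"
  using mc_addL[OF apow_GAi[of n], of "{#X#}"] by (simp add: add_mset_commute)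

lemma bc_neq: "i \<noteq> j \<Longrightarrow> rel0 {#GB i, GC j#} Q \<Longrightarrow>
   mcong (add_mset (GB i) (add_mset (GC j) (apow n))) (apow n + Q)"
  using mc_sub[of "{#GB i, GC j#}" Q "add_mset (GB i) (add_mset (GC j) (apow n))"] by simp

lemma bcE: "i \<noteq> j \<Longrightarrow> mcong (add_mset (GB i) (add_mset (GC j) (apow n))) (add_mset GE (apow (n + tau (j - i))))"
proof -
  assume ij: "i \<noteq> j"
  have "mcong (add_mset (GB i) (add_mset (GC j) (apow n))) (apow n + (apow (tau (j-i)) + {#GE#}))"
    by (rule bc_neq[OF ij r_bc_neq[OF ij]])
  moreover have "mcong (apow n + (apow (tau (j-i)) + {#GE#})) (add_mset GE (apow (n + tau (j - i))))"
    using mc_add[OF apow_add[of n "tau (j-i)"], of "{#GE#}"] by (simp add: add.assoc)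
  ultimately show ?thesis by (rule mc_trans)
qed

lemma bcD: "mcong (add_mset (GB i) (add_mset (GC i) (apow n))) (add_mset GD (apow n))"
  using mc_sub[of "{#GB i, GC i#}" "{#GD#}" "add_mset (GB i) (add_mset (GC i) (apow n))"] r_bc_eq[of i]
  by simp

lemma zero_abs2: "mcong (add_mset x {#GZero#}) {#GZero#}"
  using zero_abs[of "{#x#}"] by (simp add: add_mset_commute)

lemma mul_step: "mcong (add_mset g (rep nf)) (rep (mulg g nf))"
proof (cases g)
  case GA then show ?thesis by (cases nf) (simp_all add: shiftA apow_GA zero_abs2)
next
  case GAinv then show ?thesis by (cases nf) (simp_all add: shiftAi apow_GAi zero_abs2)
next
  case (GB i) then show ?thesis
  proof (cases nf)
    case (NU n) then show ?thesis using GB by (simp add: mc_refl)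
  next
    case (NB j n) then show ?thesis using GB by (auto intro!: zero_sub[OF r_bb[of i j]])
  next
    case (NC j n) then show ?thesis using GB bcD bcE by auto
  next
    case (ND n) then show ?thesis using GB by (auto intro!: zero_sub[OF r_bd[of i]])
  next
    case (NE n) then show ?thesis using GB by (auto intro!: zero_sub[OF r_be[of i]])
  next
    case NZ then show ?thesis using GB zero_abs2 by simp
  qed
next
  case (GC j) then show ?thesis
  proof (cases nf)
    case (NU n) then show ?thesis using GC by (simp add: mc_refl)
  next
    case (NB i n) then show ?thesis using GC bcD bcE by (auto simp: add_mset_commute)
  next
    case (NC i n) then show ?thesis using GC by (auto intro!: zero_sub[OF r_cc[of j i]])
  next
    case (ND n) then show ?thesis using GC by (auto intro!: zero_sub[OF r_cd[of j]])
  next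
    case (NE n) then show ?thesis using GC by (auto intro!: zero_sub[OF r_ce[of j]])
  next
    case NZ then show ?thesis using GC zero_abs2 by simp
  qed
next
  case GD then show ?thesis
  proof (cases nf)
    case (NU n) then show ?thesis using GD by (simp add: mc_refl)
  next
    case (NB i n) then show ?thesis using GD by (auto intro!: zero_sub[OF r_bd[of i]])
  next
    case (NC i n) then show ?thesis using GD by (auto intro!: zero_sub[OF r_cd[of i]])
  next
    case (ND n) then show ?thesis using GD by (auto intro!: zero_sub[OF r_dd])
  next
    case (NE n) then show ?thesis using GD by (auto intro!: zero_sub[OF r_de])
  next
    case NZ then show ?thesis using GD zero_abs2 by simp
  qed
next
  case GE then show ?thesis
  proof (cases nf)
    case (NU n) then show ?thesis using GE by (simp add: mc_refl)
  next
    case (NB i n) then show ?thesis using GE by (auto intro!: zero_sub[OF r_be[of i]])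
  next
    case (NC i n) then show ?thesis using GE by (auto intro!: zero_sub[OF r_ce[of i]])
  next
    case (ND n) then show ?thesis using GE by (auto intro!: zero_sub[OF r_de])
  next
    case (NE n) then show ?thesis using GE by (auto intro!: zero_sub[OF r_ee])
  next
    case NZ then show ?thesis using GE zero_abs2 by simp
  qed
next
  case GZero then show ?thesis using zero_abs by (cases nf) simp_all
qed

lemma nf_exists: "\<exists>nf. mcong u (rep nf)"
proof (induction u)
  case empty
  have "rep (NU 0) = {#}" by (simp add: apow_def)
  then show ?case by (metis mc_refl)
next
  case (add g u)
  then obtain nf where h: "mcong u (rep nf)" by blast
  have "mcong (add_mset g u) (add_mset g (rep nf))" using mc_addL[OF h, of "{#g#}"] by simp
  then show ?case using mul_step mc_trans by blast
qed




lemma M_nf: "\<exists>nf. x = abs_M (rep nf)"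
proof (induction x rule: M.abs_induct)
  case (1 u)
  obtain nf where "mcong u (rep nf)" using nf_exists by blast
  then show ?case using M.abs_eq_iff by blast
qed

lemma eval_rep:
  "eval N (rep (NU n)) = TU (n mod N)"
  "eval N (rep (NB i n)) = TB (i mod N) (n mod N)"
  "eval N (rep (NC i n)) = TC (i mod N) (n mod N)"
  "eval N (rep (ND n)) = TE ((n + tau N) mod N)"
  "eval N (rep (NE n)) = TE (n mod N)"
  "eval N (rep NZ) = TZ"
  by (simp_all add: genv_def mod_simps FF_def)

fun bnd :: "nf \<Rightarrow> int" where
  "bnd (NU n) = \<bar>n\<bar>" | "bnd (NB i n) = \<bar>i\<bar> + \<bar>n\<bar>" | "bnd (NC i n) = \<bar>i\<bar> + \<bar>n\<bar>"
| "bnd (ND n) = \<bar>n\<bar>" | "bnd (NE n) = \<bar>n\<bar>" | "bnd NZ = 0"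

lemma modinj: "a mod N = b mod N \<Longrightarrow> \<bar>a - b\<bar> < N \<Longrightarrow> a = b" for a b N :: int
proof (rule ccontr)
  assume h: "a mod N = b mod N" "\<bar>a - b\<bar> < N" "a \<noteq> b"
  then have "N dvd a - b" using mod_eq_dvd_iff by blast
  then have "\<bar>N\<bar> \<le> \<bar>a - b\<bar>" using h(3) dvd_imp_le_int by simp
  then show False using h(2) by linarith
qed

lemma sep_nf:
  assumes ne: "a \<noteq> b" and big: "3*(bnd a + bnd b) + 2 < 2^K"
  shows "eval (2^K) (rep a) \<noteq> eval (2^K) (rep b)"
proof
  let ?N = "(2::int)^K"
  assume eq: "eval ?N (rep a) = eval ?N (rep b)"
  have nb: "0 \<le> bnd x" for x by (cases x) auto
  have mi: "x = y" if "x mod ?N = y mod ?N" "\<bar>x\<bar> + \<bar>y\<bar> \<le> bnd a + bnd b" for x y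
  proof (rule modinj[OF that(1)])
    have "\<bar>x - y\<bar> \<le> \<bar>x\<bar> + \<bar>y\<bar>" by (rule abs_triangle_ineq4)
    then show "\<bar>x - y\<bar> < ?N" using that(2) big nb[of a] nb[of b] by (smt (verit))
  qed
  have mi2: "x = y" if "(x + t) mod ?N = (y + t) mod ?N" "\<bar>x\<bar> + \<bar>y\<bar> \<le> bnd a + bnd b" for x y t
  proof -
    have "?N dvd (x + t) - (y + t)" using that(1) mod_eq_dvd_iff by blast
    then have "?N dvd (x - y) - 0" by simp
    then have "(x - y) mod ?N = 0 mod ?N" using mod_eq_dvd_iff by blast
    moreover have "\<bar>x - y - 0\<bar> < ?N"
    proof -
      have "\<bar>x - y\<bar> \<le> \<bar>x\<bar> + \<bar>y\<bar>" by (rule abs_triangle_ineq4)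
      then show ?thesis using that(2) big nb[of a] nb[of b] by (smt (verit))
    qed
    ultimately have "x - y = 0" by (rule modinj)
    then show ?thesis by simp
  qed
  have t2: "\<bar>p\<bar> + \<bar>q\<bar> \<le> \<bar>p\<bar> + \<bar>r\<bar> + (\<bar>q\<bar> + \<bar>s\<bar>)" for p q r s :: int by simp
  have t2': "\<bar>p\<bar> + \<bar>q\<bar> \<le> \<bar>r\<bar> + \<bar>p\<bar> + (\<bar>s\<bar> + \<bar>q\<bar>)" for p q r s :: int by simp
  show False
  proof (cases a)
    case (NU n) show ?thesis
    proof (cases b)
      case (NU m)
      then have "n mod ?N = m mod ?N" using eq \<open>a = NU n\<close> by (simp del: rep.simps add: eval_rep)
      moreover have "\<bar>n\<bar> + \<bar>m\<bar> \<le> bnd a + bnd b" using NU \<open>a = NU n\<close> by simp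
      ultimately have "n = m" by (rule mi)
      then show ?thesis using ne NU \<open>a = NU n\<close> by simp
    qed (use \<open>a = NU n\<close> eq in \<open>simp_all del: rep.simps add: eval_rep\<close>)
  next
    case (NB i n) show ?thesis
    proof (cases b)
      case (NB j m)
      then have e: "i mod ?N = j mod ?N" "n mod ?N = m mod ?N" using eq \<open>a = NB i n\<close> by (simp_all del: rep.simps add: eval_rep)
      have "\<bar>i\<bar> + \<bar>j\<bar> \<le> bnd a + bnd b" "\<bar>n\<bar> + \<bar>m\<bar> \<le> bnd a + bnd b"
        using NB \<open>a = NB i n\<close> by simp_all
      then have "i = j" "n = m" using mi e by blast+
      then show ?thesis using ne NB \<open>a = NB i n\<close> by simp
    qed (use \<open>a = NB i n\<close> eq in \<open>simp_all del: rep.simps add: eval_rep\<close>)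
  next
    case (NC i n) show ?thesis
    proof (cases b)
      case (NC j m)
      then have e: "i mod ?N = j mod ?N" "n mod ?N = m mod ?N" using eq \<open>a = NC i n\<close> by (simp_all del: rep.simps add: eval_rep)
      have "\<bar>i\<bar> + \<bar>j\<bar> \<le> bnd a + bnd b" "\<bar>n\<bar> + \<bar>m\<bar> \<le> bnd a + bnd b"
        using NC \<open>a = NC i n\<close> by simp_all
      then have "i = j" "n = m" using mi e by blast+
      then show ?thesis using ne NC \<open>a = NC i n\<close> by simp
    qed (use \<open>a = NC i n\<close> eq in \<open>simp_all del: rep.simps add: eval_rep\<close>)
  next
    case (ND n) show ?thesis
    proof (cases b)
      case (ND m)
      then have "(n + tau ?N) mod ?N = (m + tau ?N) mod ?N" using eq \<open>a = ND n\<close> by (simp del: rep.simps add: eval_rep)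
      moreover have "\<bar>n\<bar> + \<bar>m\<bar> \<le> bnd a + bnd b" using ND \<open>a = ND n\<close> by simp
      ultimately have "n = m" by (rule mi2)
      then show ?thesis using ne ND \<open>a = ND n\<close> by simp
    next
      case (NE m)
      have "\<bar>3*(m-n)+2\<bar> \<le> 3*(\<bar>m\<bar>+\<bar>n\<bar>) + 2" by simp
      moreover have "bnd a + bnd b = \<bar>n\<bar> + \<bar>m\<bar>" using NE \<open>a = ND n\<close> by simp
      ultimately have "\<bar>3*(m-n)+2\<bar> < 2^K" using big by (smt (verit))
      then have "(n + tau (2^K)) mod 2^K \<noteq> m mod 2^K" by (rule sep_DE)
      then show ?thesis using \<open>a = ND n\<close> NE eq by (simp del: rep.simps add: eval_rep)
    qed (use \<open>a = ND n\<close> eq in \<open>simp_all del: rep.simps add: eval_rep\<close>)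
  next
    case (NE n) show ?thesis
    proof (cases b)
      case (ND m)
      have "\<bar>3*(n-m)+2\<bar> \<le> 3*(\<bar>m\<bar>+\<bar>n\<bar>) + 2" by simp
      moreover have "bnd a + bnd b = \<bar>n\<bar> + \<bar>m\<bar>" using ND \<open>a = NE n\<close> by simp
      ultimately have "\<bar>3*(n-m)+2\<bar> < 2^K" using big by (smt (verit))
      then have "(m + tau (2^K)) mod 2^K \<noteq> n mod 2^K" by (rule sep_DE)
      then show ?thesis using \<open>a = NE n\<close> ND eq by (simp del: rep.simps add: eval_rep)
    next
      case (NE m)
      then have "n mod ?N = m mod ?N" using eq \<open>a = NE n\<close> by (simp del: rep.simps add: eval_rep)
      moreover have "\<bar>n\<bar> + \<bar>m\<bar> \<le> bnd a + bnd b" using NE \<open>a = NE n\<close> by simp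
      ultimately have "n = m" by (rule mi)
      then show ?thesis using ne NE \<open>a = NE n\<close> by simp
    qed (use \<open>a = NE n\<close> eq in \<open>simp_all del: rep.simps add: eval_rep\<close>)
  next
    case NZ then show ?thesis using eq ne by (cases b) (simp_all del: rep.simps add: eval_rep)
  qed
qed

lemma sep_M: "x \<noteq> (y::M) \<Longrightarrow> \<exists>K. evalM K x \<noteq> evalM K y"
proof -
  assume ne: "x \<noteq> y"
  obtain a b where x: "x = abs_M (rep a)" and y: "y = abs_M (rep b)" using M_nf by blast
  then have ab: "a \<noteq> b" using ne by blast
  define K where "K = nat (3*(bnd a + bnd b) + 3)"
  have "3*(bnd a + bnd b) + 2 < 2^K"
    using int_less_pow2[of K] unfolding K_def by linarith
  then have "eval (2^K) (rep a) \<noteq> eval (2^K) (rep b)" by (rule sep_nf[OF ab])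
  then show ?thesis unfolding x y by (auto simp: evalM.abs_eq)
qed

lemma rf_hom:
  fixes h :: "M \<Rightarrow> 'b" and op :: "'b \<Rightarrow> 'b \<Rightarrow> 'b"
  assumes fin: "finite (range h)" and hom: "\<And>m n. h (m*n) = op (h m) (h n)" and ne: "h x \<noteq> h y"
  shows "\<exists>(S::nat set) f e (g::M \<Rightarrow> nat). finite_monoid_on S f e \<and> (\<forall>m. g m \<in> S) \<and> g 1 = e \<and>
            (\<forall>m n. g (m * n) = f (g m) (g n)) \<and> g x \<noteq> g y"
proof -
  obtain enc :: "'b \<Rightarrow> nat" where inj: "inj_on enc (range h)"
    using finite_imp_inj_to_nat_seg[OF fin] by blast
  define dec where "dec = inv_into (range h) enc"
  have de[simp]: "dec (enc (h m)) = h m" for m unfolding dec_def by (rule inv_into_f_f[OF inj]) simp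
  define S where "S = enc ` range h"
  define f where "f a b = enc (op (dec a) (dec b))" for a b
  define g where "g m = enc (h m)" for m
  have gm: "g (m * n) = f (g m) (g n)" for m n unfolding g_def f_def by (simp add: hom)
  have "finite_monoid_on S f (g 1)"
    unfolding finite_monoid_on_def
  proof (intro conjI ballI)
    show "finite S" unfolding S_def using fin by simp
    show "g 1 \<in> S" unfolding S_def g_def by simp
  next
    fix a b assume "a \<in> S" "b \<in> S"
    then obtain m n where "a = g m" "b = g n" unfolding S_def g_def by blast
    then show "f a b \<in> S" using gm[of m n, symmetric] unfolding S_def g_def by simp
  next
    fix a b c assume "a \<in> S" "b \<in> S" "c \<in> S"
    then obtain m n p where "a = g m" "b = g n" "c = g p" unfolding S_def g_def by blast
    then show "f (f a b) c = f a (f b c)" using gm by (metis mult.assoc)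
  next
    fix a assume "a \<in> S"
    then obtain m where "a = g m" unfolding S_def g_def by blast
    then show "f (g 1) a = a" using gm by (metis mult_1_left)
  next
    fix a assume "a \<in> S"
    then obtain m where "a = g m" unfolding S_def g_def by blast
    then show "f a (g 1) = a" using gm by (metis mult_1_right)
  qed
  moreover have "g x \<noteq> g y" unfolding g_def using ne inj by (auto dest: inj_onD)
  moreover have "\<forall>m. g m \<in> S" unfolding S_def g_def by simp
  ultimately show ?thesis using gm by blast
qed

lemma part1: "residually_finite TYPE(M)"
  unfolding residually_finite_def
proof (intro allI impI)
  fix x y :: M assume "x \<noteq> y"
  then obtain K where "evalM K x \<noteq> evalM K y" using sep_M by blast
  then show "\<exists>(S::nat set) f e (h::M \<Rightarrow> nat). finite_monoid_on S f e \<and> (\<forall>m. h m \<in> S) \<and> h 1 = e \<and>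
            (\<forall>m n. h (m * n) = f (h m) (h n)) \<and> h x \<noteq> h y"
    by (rule rf_hom[OF evalM_finite evalM_mult])
qed




lemma J_eq_R: "J_rel x y = R_rel x (y::'a::comm_monoid_mult)"
proof -
  have e: "{m * z * n | m n. True} = range (\<lambda>m. z * m)" for z :: 'a
  proof
    show "{m * z * n | m n. True} \<subseteq> range (\<lambda>m. z * m)"
      by clarsimp (metis mult.left_commute mult.assoc rangeI)
    show "range (\<lambda>m. z * m) \<subseteq> {m * z * n | m n. True}"
      by clarsimp (metis mult_1_left)
  qed
  show ?thesis unfolding J_rel_def R_rel_def e ..
qed

lemma L_eq_R: "L_rel x y = R_rel x (y::'a::comm_monoid_mult)"
  unfolding L_rel_def R_rel_def by (simp add: mult.commute)

lemma classes_finite: "finite ((\<lambda>y. {z. R_rel y z}) ` {y. R_rel x (y::'a::comm_monoid_mult)})"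
proof -
  have "(\<lambda>y. {z. R_rel y z}) ` {y. R_rel x y} \<subseteq> {{z. R_rel x z}}"
    unfolding R_rel_def by auto
  then show ?thesis by (rule finite_subset) simp
qed

lemma part2: "\<forall>x::M. finite (R_classes_in_J x) \<and> finite (L_classes_in_J x)"
  unfolding R_classes_in_J_def L_classes_in_J_def J_eq_R L_eq_R
  using classes_finite by blast

lemma nf_inj: "a \<noteq> b \<Longrightarrow> abs_M (rep a) \<noteq> abs_M (rep b)"
proof
  assume ab: "a \<noteq> b" and eq: "abs_M (rep a) = abs_M (rep b)"
  define K where "K = nat (3*(bnd a + bnd b) + 3)"
  have "3*(bnd a + bnd b) + 2 < 2^K"
    using int_less_pow2[of K] unfolding K_def by linarith
  then have "eval (2^K) (rep a) \<noteq> eval (2^K) (rep b)" by (rule sep_nf[OF ab])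
  moreover have "evalM K (abs_M (rep a)) = evalM K (abs_M (rep b))" using eq by simp
  ultimately show False by (simp add: evalM.abs_eq)
qed

lemma R_unit: "u * v = 1 \<Longrightarrow> R_rel (u * y) (y::'a::comm_monoid_mult)"
  unfolding R_rel_def
proof
  assume uv: "u * v = 1"
  show "range ((*) (u * y)) \<subseteq> range ((*) y)" by clarsimp (metis mult.left_commute mult.assoc rangeI)
  show "range ((*) y) \<subseteq> range ((*) (u * y))"
  proof clarsimp
    fix m
    have "y * m = u * y * (v * m)" using uv by (metis mult.assoc mult.commute mult_1_left)
    then show "y * m \<in> range ((*) (u * y))" by blast
  qed
qed

lemma apow_inv: "abs_M (apow t) * abs_M (apow (-t)) = 1"
proof -
  have "mcong (apow t + apow (-t)) (apow 0)" using apow_add[of t "-t"] by simp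
  moreover have "apow 0 = {#}" by (simp add: apow_def)
  ultimately show ?thesis by (simp add: times_M.abs_eq one_M.abs_eq M.abs_eq_iff)
qed

lemma not_R_de: "\<not> R_rel (abs_M {#GD#}) (abs_M {#GE#})"
proof
  assume "R_rel (abs_M {#GD#}) (abs_M {#GE#})"
  then have "abs_M {#GD#} * 1 \<in> range (\<lambda>m. abs_M {#GE#} * m)" unfolding R_rel_def by blast
  then obtain m where m: "abs_M {#GD#} = abs_M {#GE#} * m" by auto
  obtain nf where nf: "m = abs_M (rep nf)" using M_nf by blast
  have "abs_M {#GE#} * m = abs_M (add_mset GE (rep nf))" by (simp add: nf times_M.abs_eq)
  also have "\<dots> = abs_M (rep (mulg GE nf))" using mul_step[of GE nf] M.abs_eq_iff by blast
  finally have "abs_M (rep (ND 0)) = abs_M (rep (mulg GE nf))" using m by (simp add: apow_def)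
  moreover have "ND 0 \<noteq> mulg GE nf" by (cases nf) auto
  ultimately show False using nf_inj by blast
qed

lemma part3: "\<not> R_action_residually_finite TYPE(M)"
proof
  assume "R_action_residually_finite TYPE(M)"
  then have all: "\<forall>s t :: M. \<not> R_rel s t \<longrightarrow>
        (\<exists>(X::nat set) (act::M \<Rightarrow> nat \<Rightarrow> nat) (\<phi>::M \<Rightarrow> nat).
            finite X \<and> (\<forall>m. \<forall>x\<in>X. act m x \<in> X) \<and>
            (\<forall>x\<in>X. act 1 x = x) \<and>
            (\<forall>m n. \<forall>x\<in>X. act (m * n) x = act m (act n x)) \<and>
            (\<forall>y. \<phi> y \<in> X) \<and> (\<forall>y z. R_rel y z \<longrightarrow> \<phi> y = \<phi> z) \<and>
            (\<forall>m y. \<phi> (m * y) = act m (\<phi> y)) \<and>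
            \<phi> s \<noteq> \<phi> t)" by (simp only: R_action_residually_finite_def)
  from all[rule_format, OF not_R_de] obtain X :: "nat set" and act :: "M \<Rightarrow> nat \<Rightarrow> nat" and \<phi> :: "M \<Rightarrow> nat" where
    fin: "finite X" and phiX: "\<forall>y. \<phi> y \<in> X" and phiR: "\<forall>y z. R_rel y z \<longrightarrow> \<phi> y = \<phi> z"
    and phim: "\<forall>m y. \<phi> (m * y) = act m (\<phi> y)"
    and ne: "\<phi> (abs_M {#GD#}) \<noteq> \<phi> (abs_M {#GE#})"
    by blast
  let ?c = "\<lambda>j::nat. \<phi> (abs_M {#GC (int j)#})"
  have "\<not> inj_on ?c UNIV"
  proof
    assume "inj_on ?c UNIV"
    moreover have "?c ` UNIV \<subseteq> X" using phiX by auto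
    ultimately have "finite (UNIV :: nat set)" using inj_on_finite fin by blast
    then show False by simp
  qed
  then obtain j1 j2 :: nat where j: "j1 \<noteq> j2" "?c j1 = ?c j2" unfolding inj_on_def by blast
  define i where "i = int j1"
  define j where "j = int j2"
  have ij: "i \<noteq> j" using j(1) unfolding i_def j_def by simp
  have cc: "\<phi> (abs_M {#GC i#}) = \<phi> (abs_M {#GC j#})" using j(2) unfolding i_def j_def by simp
  have d: "abs_M {#GD#} = abs_M {#GB i#} * abs_M {#GC i#}"
    using mc_base[OF r_bc_eq[of i]] by (simp add: times_M.abs_eq M.abs_eq_iff add_mset_commute[of "GC i"] mc_sym)
  define t where "t = tau (j - i)"
  have e: "abs_M {#GB i#} * abs_M {#GC j#} = abs_M (apow t) * abs_M {#GE#}"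
    using mc_base[OF r_bc_neq[OF ij]] unfolding t_def by (simp add: times_M.abs_eq M.abs_eq_iff add_mset_commute[of "GC j"])
  have "\<phi> (abs_M {#GD#}) = act (abs_M {#GB i#}) (\<phi> (abs_M {#GC i#}))" using d phim by simp
  also have "\<dots> = act (abs_M {#GB i#}) (\<phi> (abs_M {#GC j#}))" using cc by simp
  also have "\<dots> = \<phi> (abs_M (apow t) * abs_M {#GE#})" using e phim by metis
  also have "\<dots> = \<phi> (abs_M {#GE#})" using phiR R_unit[OF apow_inv[of t]] by blast
  finally show False using ne by simp
qed



theorem mainTheorem18:
  shows "residually_finite TYPE(M)
         \<and> (\<forall>x::M. finite (R_classes_in_J x) \<and> finite (L_classes_in_J x))
         \<and> \<not> R_action_residually_finite TYPE(M)"
  using part1 part2 part3 by blast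

end
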